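(* Let $G$ be a nice graph of size $m$ and maximum degree $\Delta$. (1) If $x$ is the minimum label sum of a proper labelling of $G$, then $x \leq {\rm ML}^{\rm W}(G)+m \leq 3(m+\Delta x)$. (2) $\chi'_{\rm s}(G) \leq {\rm ME}^{\rm W}(G)+1 \leq 3(1+\Delta\chi'_{\rm s}(G))$. (3) If $x$ is the minimum vertex sum of a proper labelling of $G$, then $x \leq {\rm MV}^{\rm W}(G)+\Delta \leq 3\Delta(1+x)$.
   Context: All graphs are finite and simple. A walk of a graph $G$ is a sequence of vertices $u_0u_1\dots u_p$ with $u_tu_{t+1}\in E(G)$ for all $t$ (vertices and edges may repeat); its length is $p$. For a walk $W$ of $G$, $G+W$ is the multigraph on $V(G)$ whose edge multiset consists of $E(G)$ together with each edge added as many times as $W$ traverses it. A multigraph is locally irregular if no two adjacent vertices have the same degree; $W$ is irregularising if $G+W$ is locally irregular. A graph is nice if it is connected and not isomorphic to $K_2$. ${\rm ML}^{\rm W}(G)$ is the minimum length of an irregularising walk of $G$; ${\rm ME}^{\rm W}(G)$ is the minimum, over irregularising walks $W$, of the maximum number of times $W$ traverses an edge; ${\rm MV}^{\rm W}(G)$ is the minimum, over irregularising walks $W$, of the maximum over vertices $v$ of the number of edges of $W$ (with multiplicity) incident to $v$. A labelling of $G$ is a map $\ell:E(G)\to\{1,2,\dots\}$; for a vertex $u$, $\sigma_\ell(u)=\sum_{v\in N(u)}\ell(uv)$; $\ell$ is proper if $\sigma_\ell(u)\ne\sigma_\ell(v)$ for all $uv\in E(G)$. $\chi'_{\rm s}(G)$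 is the smallest $k$ such that $G$ has a proper labelling with labels in $\{1,\dots,k\}$. The label sum of $\ell$ is $\sum_{e\in E(G)}\ell(e)$; the vertex sum of $\ell$ is $\max_{u\in V(G)}\sigma_\ell(u)$; the minimum label sum (resp. minimum vertex sum) of a proper labelling of $G$ is the minimum of these quantities over proper labellings of $G$. *)

theory Defs
  imports Main
begin

definition simple_graph :: "'a set \<Rightarrow> 'a set set \<Rightarrow> bool" where
  "simple_graph V E \<longleftrightarrow> finite V \<and>
     (\<forall>e\<in>E. \<exists>u v. e = {u, v} \<and> u \<noteq> v \<and> u \<in> V \<and> v \<in> V)"

definition adj :: "'a set set \<Rightarrow> 'a \<Rightarrow> 'a \<Rightarrow> bool" where
  "adj E u v \<longleftrightarrow> {u, v} \<in> E"

definition connected_graph :: "'a set \<Rightarrow> 'a set set \<Rightarrow> bool" where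
  "connected_graph V E \<longleftrightarrow> V \<noteq> {} \<and>
     (\<forall>u\<in>V. \<forall>v\<in>V. (u, v) \<in> {(x, y). adj E x y}\<^sup>*)"

definition is_K2 :: "'a set \<Rightarrow> 'a set set \<Rightarrow> bool" where
  "is_K2 V E \<longleftrightarrow> card V = 2 \<and> card E = 1"

definition nice_graph :: "'a set \<Rightarrow> 'a set set \<Rightarrow> bool" where
  "nice_graph V E \<longleftrightarrow> simple_graph V E \<and> connected_graph V E \<and> \<not> is_K2 V E"

definition degree :: "'a set set \<Rightarrow> 'a \<Rightarrow> nat" where
  "degree E v = card {e\<in>E. v \<in> e}"

definition max_degree :: "'a set \<Rightarrow> 'a set set \<Rightarrow> nat" where
  "max_degree V E = Max (insert 0 (degree E ` V))"

definition is_walk :: "'a set \<Rightarrow> 'a set set \<Rightarrow> 'a list \<Rightarrow> bool" where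
  "is_walk V E ws \<longleftrightarrow> ws \<noteq> [] \<and> set ws \<subseteq> V \<and>
     (\<forall>i < length ws - 1. {ws ! i, ws ! Suc i} \<in> E)"

definition walk_length :: "'a list \<Rightarrow> nat" where
  "walk_length ws = length ws - 1"

definition walk_edge_count :: "'a list \<Rightarrow> 'a set \<Rightarrow> nat" where
  "walk_edge_count ws e = card {i. i < length ws - 1 \<and> {ws ! i, ws ! Suc i} = e}"

definition walk_vertex_count :: "'a list \<Rightarrow> 'a \<Rightarrow> nat" where
  "walk_vertex_count ws v = card {i. i < length ws - 1 \<and> v \<in> {ws ! i, ws ! Suc i}}"

text \<open>Degree of v in the multigraph G + W.\<close>
definition plus_walk_degree :: "'a set set \<Rightarrow> 'a list \<Rightarrow> 'a \<Rightarrow> nat" where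
  "plus_walk_degree E ws v = degree E v + walk_vertex_count ws v"

definition irregularising :: "'a set \<Rightarrow> 'a set set \<Rightarrow> 'a list \<Rightarrow> bool" where
  "irregularising V E ws \<longleftrightarrow> is_walk V E ws \<and>
     (\<forall>u v. {u, v} \<in> E \<longrightarrow> plus_walk_degree E ws u \<noteq> plus_walk_degree E ws v)"

definition walk_max_edge :: "'a set set \<Rightarrow> 'a list \<Rightarrow> nat" where
  "walk_max_edge E ws = Max (insert 0 (walk_edge_count ws ` E))"

definition walk_max_vertex :: "'a set \<Rightarrow> 'a list \<Rightarrow> nat" where
  "walk_max_vertex V ws = Max (insert 0 (walk_vertex_count ws ` V))"

definition min_len_W :: "'a set \<Rightarrow> 'a set set \<Rightarrow> nat" where
  "min_len_W V E = (LEAST n. \<exists>ws. irregularising V E ws \<and> walk_length ws = n)"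

definition min_edge_W :: "'a set \<Rightarrow> 'a set set \<Rightarrow> nat" where
  "min_edge_W V E = (LEAST n. \<exists>ws. irregularising V E ws \<and> walk_max_edge E ws = n)"

definition min_vert_W :: "'a set \<Rightarrow> 'a set set \<Rightarrow> nat" where
  "min_vert_W V E = (LEAST n. \<exists>ws. irregularising V E ws \<and> walk_max_vertex V ws = n)"

text \<open>A labelling assigns positive integers to the edges; values off E are irrelevant.\<close>
definition labelling :: "'a set set \<Rightarrow> ('a set \<Rightarrow> nat) \<Rightarrow> bool" where
  "labelling E l \<longleftrightarrow> (\<forall>e\<in>E. 1 \<le> l e)"

definition sigma :: "'a set set \<Rightarrow> ('a set \<Rightarrow> nat) \<Rightarrow> 'a \<Rightarrow> nat" where
  "sigma E l u = (\<Sum>e\<in>{e\<in>E. u \<in> e}. l e)"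

definition proper_labelling :: "'a set set \<Rightarrow> ('a set \<Rightarrow> nat) \<Rightarrow> bool" where
  "proper_labelling E l \<longleftrightarrow> labelling E l \<and>
     (\<forall>u v. {u, v} \<in> E \<longrightarrow> sigma E l u \<noteq> sigma E l v)"

definition chi_s :: "'a set set \<Rightarrow> nat" where
  "chi_s E = (LEAST k. \<exists>l. proper_labelling E l \<and> (\<forall>e\<in>E. l e \<le> k))"

definition label_sum :: "'a set set \<Rightarrow> ('a set \<Rightarrow> nat) \<Rightarrow> nat" where
  "label_sum E l = (\<Sum>e\<in>E. l e)"

definition vertex_sum :: "'a set \<Rightarrow> 'a set set \<Rightarrow> ('a set \<Rightarrow> nat) \<Rightarrow> nat" where
  "vertex_sum V E l = Max (insert 0 (sigma E l ` V))"

definition min_label_sum :: "'a set set \<Rightarrow> nat" where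
  "min_label_sum E = (LEAST x. \<exists>l. proper_labelling E l \<and> label_sum E l = x)"

definition min_vertex_sum :: "'a set \<Rightarrow> 'a set set \<Rightarrow> nat" where
  "min_vertex_sum V E = (LEAST x. \<exists>l. proper_labelling E l \<and> vertex_sum V E l = x)"

end

theory Submission
  imports Defs "HOL-Library.Nat_Bijection"
begin

fun el :: "'a list \<Rightarrow> 'a set list" where
  "el (x # y # r) = {x, y} # el (y # r)"
| "el _ = []"

lemma el_length: "length (el ws) = length ws - 1"
  by (induction ws rule: el.induct) auto

lemma el_nth: "i < length ws - 1 \<Longrightarrow> el ws ! i = {ws ! i, ws ! Suc i}"
proof (induction ws arbitrary: i rule: el.induct)
  case (1 x y r)
  then show ?case by (cases i) auto
qed auto

lemma el_append: "el (xs @ u # ys) = el (xs @ [u]) @ el (u # ys)"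
proof (induction xs)
  case (Cons a xs)
  then show ?case by (cases xs) auto
qed auto

lemma el_subset: "x \<in> set (el ws) \<Longrightarrow> x \<subseteq> set ws"
  by (induction ws rule: el.induct) auto

lemma card_el: "card {i. i < length ws - 1 \<and> P {ws ! i, ws ! Suc i}} = length (filter P (el ws))"
  unfolding length_filter_conv_card el_length
  by (rule arg_cong[where f=card]) (auto simp: el_nth)

lemma wec_el: "walk_edge_count ws e = count_list (el ws) e"
  unfolding walk_edge_count_def count_list_eq_length_filter
  using card_el[of ws "\<lambda>x. x = e"] by (metis (mono_tags, lifting) filter_cong)

lemma wvc_el: "walk_vertex_count ws v = length (filter (\<lambda>x. v \<in> x) (el ws))"
  unfolding walk_vertex_count_def using card_el[of ws "\<lambda>x. v \<in> x"] by simp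

lemma wl_el: "walk_length ws = length (el ws)"
  by (simp add: walk_length_def el_length)

lemma is_walk_el: "is_walk V E ws \<longleftrightarrow> ws \<noteq> [] \<and> set ws \<subseteq> V \<and> set (el ws) \<subseteq> E"
proof -
  have "(\<forall>i < length ws - 1. {ws ! i, ws ! Suc i} \<in> E) \<longleftrightarrow> set (el ws) \<subseteq> E"
  proof
    assume "\<forall>i < length ws - 1. {ws ! i, ws ! Suc i} \<in> E"
    then show "set (el ws) \<subseteq> E" by (auto simp: in_set_conv_nth el_length el_nth)
  next
    assume a: "set (el ws) \<subseteq> E"
    show "\<forall>i < length ws - 1. {ws ! i, ws ! Suc i} \<in> E"
    proof (intro allI impI)
      fix i assume i: "i < length ws - 1"
      then have "el ws ! i \<in> set (el ws)" by (simp add: el_length)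
      then show "{ws ! i, ws ! Suc i} \<in> E" using a el_nth[OF i] by auto
    qed
  qed
  then show ?thesis unfolding is_walk_def by blast
qed

lemma count_filter: "count_list (filter P xs) e = (if P e then count_list xs e else 0)"
  by (induction xs) auto

lemma filter_sum:
  assumes "set xs \<subseteq> E" "finite E"
  shows "length (filter (\<lambda>x. v \<in> x) xs) = (\<Sum>e\<in>{e\<in>E. v \<in> e}. count_list xs e)"
proof -
  have "length (filter (\<lambda>x. v \<in> x) xs) = (\<Sum>e\<in>{e\<in>E. v \<in> e}. count_list (filter (\<lambda>x. v \<in> x) xs) e)"
    by (rule sum_count_set[symmetric]) (use assms in auto)
  also have "\<dots> = (\<Sum>e\<in>{e\<in>E. v \<in> e}. count_list xs e)"
    by (rule sum.cong) (auto simp: count_filter)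
  finally show ?thesis .
qed

lemma wvc_sum:
  assumes "set (el ws) \<subseteq> E" "finite E"
  shows "walk_vertex_count ws v = (\<Sum>e\<in>{e\<in>E. v \<in> e}. walk_edge_count ws e)"
  using filter_sum[OF assms] by (simp add: wvc_el wec_el)

lemma wl_sum:
  assumes "set (el ws) \<subseteq> E" "finite E"
  shows "walk_length ws = (\<Sum>e\<in>E. walk_edge_count ws e)"
  using sum_count_set[OF assms] by (simp add: wl_el wec_el)

lemma detour1:
  assumes "u \<in> set W"
  shows "\<exists>W'. set W' = insert v (set W) \<and> set (el W') = insert {u,v} (set (el W))
     \<and> (\<forall>x. count_list (el W') x = count_list (el W) x + (if x = {u,v} then 2 else 0))"
proof -
  obtain xs ys where W: "W = xs @ u # ys" using split_list[OF assms] by blast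
  define W' where "W' = xs @ u # v # u # ys"
  have e1: "el W = el (xs @ [u]) @ el (u # ys)" using W el_append by metis
  have e2: "el W' = el (xs @ [u]) @ [{u,v},{u,v}] @ el (u # ys)"
    unfolding W'_def by (subst el_append) (auto simp: insert_commute)
  have s: "set W' = insert v (set W)" unfolding W'_def W by auto
  show ?thesis
    by (rule exI[of _ W'], unfold s e1 e2) (auto simp: count_list_append)
qed

lemma simple_finiteE: "simple_graph V E \<Longrightarrow> finite E"
proof -
  assume a: "simple_graph V E"
  have "E \<subseteq> Pow V"
  proof
    fix e assume "e \<in> E"
    then obtain u v where "e = {u,v}" "u \<in> V" "v \<in> V" using a unfolding simple_graph_def by meson
    then show "e \<in> Pow V" by auto
  qed
  moreover have "finite V" using a unfolding simple_graph_def by simp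
  ultimately show ?thesis using finite_subset by (metis finite_Pow_iff)
qed

lemma simple_edge: "simple_graph V E \<Longrightarrow> {u, v} \<in> E \<Longrightarrow> u \<in> V \<and> v \<in> V \<and> u \<noteq> v"
  unfolding simple_graph_def by (metis doubleton_eq_iff)

lemma deg_le: "simple_graph V E \<Longrightarrow> u \<in> V \<Longrightarrow> degree E u \<le> max_degree V E"
  unfolding max_degree_def simple_graph_def by (intro Max_ge) auto

lemma deg_pos: "simple_graph V E \<Longrightarrow> e \<in> E \<Longrightarrow> u \<in> e \<Longrightarrow> 1 \<le> degree E u"
proof -
  assume a: "simple_graph V E" "e \<in> E" "u \<in> e"
  have "finite {e\<in>E. u\<in>e}" using simple_finiteE[OF a(1)] by auto
  moreover have "e \<in> {e\<in>E. u\<in>e}" using a by auto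
  ultimately have "card {e\<in>E. u\<in>e} > 0" using card_gt_0_iff by blast
  then show ?thesis unfolding degree_def by simp
qed

lemma D_pos: "simple_graph V E \<Longrightarrow> e \<in> E \<Longrightarrow> 1 \<le> max_degree V E"
proof -
  assume a: "simple_graph V E" "e \<in> E"
  then obtain u v where uv: "e = {u,v}" "u \<in> V" unfolding simple_graph_def by meson
  have "1 \<le> degree E u" using deg_pos[OF a, of u] uv(1) by simp
  moreover have "degree E u \<le> max_degree V E" using deg_le[OF a(1) uv(2)] .
  ultimately show ?thesis by linarith
qed

lemma crossing:
  assumes "connected_graph V E" "s \<in> S" "w \<in> V" "w \<notin> S" "S \<subseteq> V"
  shows "\<exists>u v. u \<in> S \<and> v \<notin> S \<and> {u, v} \<in> E"
proof -
  have "(s, w) \<in> {(x, y). adj E x y}\<^sup>*" using assms unfolding connected_graph_def by blast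
  then have "w \<in> S \<or> (\<exists>u v. u \<in> S \<and> v \<notin> S \<and> {u, v} \<in> E)"
  proof (induction rule: rtrancl_induct)
    case base then show ?case using assms by simp
  next
    case (step y z)
    have yz: "{y, z} \<in> E" using step(2) by (simp add: adj_def)
    show ?case
    proof (cases "z \<in> S")
      case True then show ?thesis by simp
    next
      case False
      show ?thesis
      proof (cases "y \<in> S")
        case True then show ?thesis using False yz by blast
      next
        case False then show ?thesis using step(3) by simp
      qed
    qed
  qed
  then show ?thesis using assms(4) by simp
qed

lemma spanning:
  assumes sg: "simple_graph V E" and cg: "connected_graph V E"
  shows "\<exists>W. W \<noteq> [] \<and> set W = V \<and> set (el W) \<subseteq> E \<and>
     (\<forall>x. count_list (el W) x = 0 \<or> count_list (el W) x = 2)"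
proof -
  have fin: "finite V" using sg unfolding simple_graph_def by simp
  obtain r where r: "r \<in> V" using cg unfolding connected_graph_def by blast
  have "\<forall>k. k \<le> card V \<longrightarrow> (\<exists>W. W \<noteq> [] \<and> set W \<subseteq> V \<and> k \<le> card (set W) \<and> set (el W) \<subseteq> E \<and>
     (\<forall>x. count_list (el W) x = 0 \<or> count_list (el W) x = 2))"
  proof
    fix k show "k \<le> card V \<longrightarrow> (\<exists>W. W \<noteq> [] \<and> set W \<subseteq> V \<and> k \<le> card (set W) \<and> set (el W) \<subseteq> E \<and>
     (\<forall>x. count_list (el W) x = 0 \<or> count_list (el W) x = 2))"
    proof (induction k)
      case 0
      show ?case by (rule impI, rule exI[of _ "[r]"]) (use r in auto)
    next
      case (Suc k)
      show ?case
      proof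
        assume k: "Suc k \<le> card V"
        then obtain W where W: "W \<noteq> []" "set W \<subseteq> V" "k \<le> card (set W)" "set (el W) \<subseteq> E"
          "\<forall>x. count_list (el W) x = 0 \<or> count_list (el W) x = 2" using Suc by auto
        show "\<exists>W. W \<noteq> [] \<and> set W \<subseteq> V \<and> Suc k \<le> card (set W) \<and> set (el W) \<subseteq> E \<and>
          (\<forall>x. count_list (el W) x = 0 \<or> count_list (el W) x = 2)"
        proof (cases "Suc k \<le> card (set W)")
          case True then show ?thesis using W by blast
        next
          case False
          then have "card (set W) < card V" using k by simp
          then have "set W \<noteq> V" by auto
          then obtain w where w: "w \<in> V" "w \<notin> set W" using W(2) by blast
          obtain u v where uv: "u \<in> set W" "v \<notin> set W" "{u,v} \<in> E"
            using crossing[OF cg _ w W(2), of "hd W"] W(1) by auto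
          have vV: "v \<in> V" using simple_edge[OF sg uv(3)] by simp
          obtain W' where W': "set W' = insert v (set W)" "set (el W') = insert {u,v} (set (el W))"
            "\<forall>x. count_list (el W') x = count_list (el W) x + (if x = {u,v} then 2 else 0)"
            using detour1[OF uv(1), of v] by blast
          have "{u,v} \<notin> set (el W)" using el_subset uv(2) by blast
          then have c0: "count_list (el W) {u,v} = 0" by (simp add: count_list_0_iff)
          have cW: "card (set W') = Suc (card (set W))" using W'(1) uv(2) by simp
          have "W' \<noteq> []" using W'(1) by auto
          moreover have "set W' \<subseteq> V" using W'(1) W(2) vV by auto
          moreover have "Suc k \<le> card (set W')" using W(3) cW by linarith
          moreover have "set (el W') \<subseteq> E" using W'(2) W(4) uv(3) by auto
          moreover have "\<forall>x. count_list (el W') x = 0 \<or> count_list (el W') x = 2"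
          proof
            fix x show "count_list (el W') x = 0 \<or> count_list (el W') x = 2"
            proof (cases "x = {u,v}")
              case True
              then show ?thesis using W'(3)[rule_format, of x] c0 by simp
            next
              case False
              then show ?thesis using W'(3)[rule_format, of x] W(5)[rule_format, of x] by simp
            qed
          qed
          ultimately show ?thesis by blast
        qed
      qed
    qed
  qed
  then obtain W where W: "W \<noteq> []" "set W \<subseteq> V" "card V \<le> card (set W)" "set (el W) \<subseteq> E"
     "\<forall>x. count_list (el W) x = 0 \<or> count_list (el W) x = 2" by blast
  have "set W = V" using card_seteq[OF fin W(2) W(3)] .
  then show ?thesis using W by blast
qed

lemma detourk:
  assumes "u \<in> set W" "v \<in> set W" "{u,v} \<in> E" "set (el W) \<subseteq> E"
  shows "\<exists>W'. set W' = set W \<and> set (el W') \<subseteq> E \<and>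
    (\<forall>x. count_list (el W') x = count_list (el W) x + (if x = {u,v} then 2 * k else 0))"
proof (induction k)
  case 0 then show ?case using assms by auto
next
  case (Suc k)
  then obtain W1 where W1: "set W1 = set W" "set (el W1) \<subseteq> E"
    "\<forall>x. count_list (el W1) x = count_list (el W) x + (if x = {u,v} then 2 * k else 0)" by blast
  obtain W' where W': "set W' = insert v (set W1)" "set (el W') = insert {u,v} (set (el W1))"
     "\<forall>x. count_list (el W') x = count_list (el W1) x + (if x = {u,v} then 2 else 0)"
    using detour1[of u W1 v] W1(1) assms(1) by blast
  have "set W' = set W" using W'(1) W1(1) assms(2) by auto
  moreover have "set (el W') \<subseteq> E" using W'(2) W1(2) assms(3) by auto
  moreover have "\<forall>x. count_list (el W') x = count_list (el W) x + (if x = {u,v} then 2 * Suc k else 0)"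
  proof
    fix x show "count_list (el W') x = count_list (el W) x + (if x = {u,v} then 2 * Suc k else 0)"
      using W'(3)[rule_format, of x] W1(3)[rule_format, of x] by simp
  qed
  ultimately show ?case by blast
qed

lemma detoursF:
  assumes "finite F" "\<forall>e\<in>F. e \<in> E \<and> (\<exists>u v. e = {u,v} \<and> u \<in> set W \<and> v \<in> set W)" "set (el W) \<subseteq> E"
  shows "\<exists>W'. set W' = set W \<and> set (el W') \<subseteq> E \<and>
    (\<forall>x. count_list (el W') x = count_list (el W) x + (if x \<in> F then 2 * d x else 0))"
  using assms
proof (induction F rule: finite_induct)
  case empty then show ?case by auto
next
  case (insert e F)
  have p1: "\<forall>e\<in>F. e \<in> E \<and> (\<exists>u v. e = {u,v} \<and> u \<in> set W \<and> v \<in> set W)"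
    using insert.prems(1) by simp
  obtain W1 where W1: "set W1 = set W" "set (el W1) \<subseteq> E"
    "\<forall>x. count_list (el W1) x = count_list (el W) x + (if x \<in> F then 2 * d x else 0)"
    using insert.IH[OF p1 insert.prems(2)] by blast
  have "e \<in> E \<and> (\<exists>u v. e = {u,v} \<and> u \<in> set W \<and> v \<in> set W)" using insert.prems(1) by simp
  then obtain u v where uv: "e = {u,v}" "u \<in> set W" "v \<in> set W" "e \<in> E" by blast
  have u1: "u \<in> set W1" "v \<in> set W1" "{u,v} \<in> E" using uv W1(1) by auto
  obtain W' where W': "set W' = set W1" "set (el W') \<subseteq> E"
    "\<forall>x. count_list (el W') x = count_list (el W1) x + (if x = {u,v} then 2 * d e else 0)"
    using detourk[OF u1 W1(2), of "d e"] by blast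
  have "set W' = set W" using W'(1) W1(1) by simp
  moreover have "set (el W') \<subseteq> E" using W'(2) by simp
  moreover have "\<forall>x. count_list (el W') x = count_list (el W) x + (if x \<in> insert e F then 2 * d x else 0)"
  proof
    fix x show "count_list (el W') x = count_list (el W) x + (if x \<in> insert e F then 2 * d x else 0)"
    proof (cases "x = e")
      case True
      then show ?thesis using W'(3)[rule_format, of x] W1(3)[rule_format, of x] insert.hyps(2) uv(1) by simp
    next
      case False
      then show ?thesis using W'(3)[rule_format, of x] W1(3)[rule_format, of x] uv(1) by simp
    qed
  qed
  ultimately show ?case by blast
qed

lemma arith1:
  fixes a b D s t :: nat
  assumes "a \<le> D" "b \<le> D" "1 \<le> D" "s < t"
  shows "a + 2*D*s < b + 2*D*t"
proof -
  have "2*D*(s+1) \<le> 2*D*t" using assms(4) by (intro mult_le_mono2) simp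
  then have "2*D*s + 2*D \<le> 2*D*t" by (simp add: algebra_simps)
  then show ?thesis using assms(1-3) by linarith
qed

lemma arith2:
  fixes a b D s t :: nat
  assumes "a \<le> D" "b \<le> D" "1 \<le> D" "s \<noteq> t"
  shows "a + 2*D*s \<noteq> b + 2*D*t"
proof (cases "s < t")
  case True then show ?thesis using arith1[OF assms(1-3) True] by simp
next
  case False then have "t < s" using assms(4) by simp
  then show ?thesis using arith1[OF assms(2,1,3)] by fastforce
qed

lemma K2:
  assumes sg: "simple_graph V E" and cg: "connected_graph V E" and uv: "{u,v} \<in> E"
    and eq: "{e\<in>E. u \<in> e} = {e\<in>E. v \<in> e}"
  shows "is_K2 V E"
proof -
  have uvV: "u \<in> V" "v \<in> V" "u \<noteq> v" using simple_edge[OF sg uv] by auto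
  have eqp: "\<forall>e\<in>E. u \<in> e \<longleftrightarrow> v \<in> e" using eq unfolding set_eq_iff by auto
  have VV: "V = {u,v}"
  proof
    show "{u,v} \<subseteq> V" using uvV by simp
    show "V \<subseteq> {u,v}"
    proof
      fix w assume w: "w \<in> V"
      have "(u, w) \<in> {(x, y). adj E x y}\<^sup>*" using conjunct2[OF cg[unfolded connected_graph_def], rule_format, OF uvV(1) w] .
      then show "w \<in> {u,v}"
      proof (induction rule: rtrancl_induct)
        case base then show ?case by simp
      next
        case (step y z)
        have yz: "{y, z} \<in> E" using step(2) by (simp add: adj_def)
        have e1: "u \<in> {y,z} \<longleftrightarrow> v \<in> {y,z}" using bspec[OF eqp yz] .
        have y: "y = u \<or> y = v" using step(3) by simp
        then show ?case using e1 uvV(3) by auto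
      qed
    qed
  qed
  have EE: "E = {{u,v}}"
  proof
    show "{{u,v}} \<subseteq> E" using uv by simp
    show "E \<subseteq> {{u,v}}"
    proof
      fix e assume e: "e \<in> E"
      then obtain a b where ab: "e = {a,b}" "a \<noteq> b" "a \<in> V" "b \<in> V"
        using sg unfolding simple_graph_def by meson
      then show "e \<in> {{u,v}}" using VV by auto
    qed
  qed
  show ?thesis unfolding is_K2_def VV EE using uvV(3) by simp
qed

lemma exists_proper:
  assumes ng: "nice_graph V E"
  shows "\<exists>l. proper_labelling E l"
proof -
  have sg: "simple_graph V E" and cg: "connected_graph V E" and nk: "\<not> is_K2 V E"
    using ng unfolding nice_graph_def by auto
  have fE: "finite E" using simple_finiteE[OF sg] .
  obtain f :: "'a set \<Rightarrow> nat" and n where f: "inj_on f E" using finite_imp_inj_to_nat_seg[OF fE] by blast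
  define l where "l = (\<lambda>e. (2::nat) ^ f e)"
  have sig: "sigma E l w = set_encode (f ` {e\<in>E. w \<in> e})" for w
  proof -
    have "inj_on f {e\<in>E. w \<in> e}" using f by (rule inj_on_subset) auto
    then show ?thesis unfolding sigma_def set_encode_def l_def by (simp add: sum.reindex)
  qed
  have "proper_labelling E l"
    unfolding proper_labelling_def labelling_def
  proof (intro conjI allI impI ballI)
    fix e assume "e \<in> E" then show "1 \<le> l e" unfolding l_def by simp
  next
    fix u v assume uv: "{u,v} \<in> E"
    show "sigma E l u \<noteq> sigma E l v"
    proof
      assume "sigma E l u = sigma E l v"
      then have "set_encode (f ` {e\<in>E. u \<in> e}) = set_encode (f ` {e\<in>E. v \<in> e})" by (simp add: sig)
      then have "f ` {e\<in>E. u \<in> e} = f ` {e\<in>E. v \<in> e}" using fE by (subst (asm) set_encode_eq) auto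
      then have "{e\<in>E. u \<in> e} = {e\<in>E. v \<in> e}" using inj_on_image_eq_iff[OF f] by blast
      then have "is_K2 V E" using K2[OF sg cg uv] by simp
      then show False using nk by simp
    qed
  qed
  then show ?thesis by blast
qed

lemma sigma_walk:
  assumes sg: "simple_graph V E" and w: "set (el W) \<subseteq> E"
  shows "sigma E (\<lambda>e. 1 + walk_edge_count W e) u = plus_walk_degree E W u"
proof -
  have fE: "finite E" using simple_finiteE[OF sg] .
  have "sigma E (\<lambda>e. 1 + walk_edge_count W e) u = card {e\<in>E. u \<in> e} + (\<Sum>e\<in>{e\<in>E. u \<in> e}. walk_edge_count W e)"
    unfolding sigma_def sum.distrib by simp
  also have "\<dots> = plus_walk_degree E W u"
    unfolding plus_walk_degree_def degree_def using wvc_sum[OF w fE] by simp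
  finally show ?thesis .
qed

lemma LB:
  assumes sg: "simple_graph V E" and ir: "irregularising V E W"
  shows "proper_labelling E (\<lambda>e. 1 + walk_edge_count W e)"
    "label_sum E (\<lambda>e. 1 + walk_edge_count W e) = card E + walk_length W"
    "\<forall>e\<in>E. 1 + walk_edge_count W e \<le> 1 + walk_max_edge E W"
    "vertex_sum V E (\<lambda>e. 1 + walk_edge_count W e) \<le> max_degree V E + walk_max_vertex V W"
proof -
  have fE: "finite E" using simple_finiteE[OF sg] .
  have fV: "finite V" using sg unfolding simple_graph_def by simp
  have w: "set (el W) \<subseteq> E" using ir unfolding irregularising_def is_walk_el by simp
  show "proper_labelling E (\<lambda>e. 1 + walk_edge_count W e)"
    unfolding proper_labelling_def labelling_def
  proof (intro conjI ballI allI impI)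
    fix u v assume uv: "{u,v} \<in> E"
    show "sigma E (\<lambda>e. 1 + walk_edge_count W e) u \<noteq> sigma E (\<lambda>e. 1 + walk_edge_count W e) v"
      unfolding sigma_walk[OF sg w] using ir uv unfolding irregularising_def by blast
  qed simp
  show "label_sum E (\<lambda>e. 1 + walk_edge_count W e) = card E + walk_length W"
    unfolding label_sum_def sum.distrib by (simp add: wl_sum[OF w fE])
  show "\<forall>e\<in>E. 1 + walk_edge_count W e \<le> 1 + walk_max_edge E W"
    unfolding walk_max_edge_def using fE by (simp add: Max_ge_iff)
  show "vertex_sum V E (\<lambda>e. 1 + walk_edge_count W e) \<le> max_degree V E + walk_max_vertex V W"
    unfolding vertex_sum_def
  proof (rule Max.boundedI)
    show "finite (insert 0 (sigma E (\<lambda>e. 1 + walk_edge_count W e) ` V))" using fV by simp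
    show "insert 0 (sigma E (\<lambda>e. 1 + walk_edge_count W e) ` V) \<noteq> {}" by simp
    fix a assume "a \<in> insert 0 (sigma E (\<lambda>e. 1 + walk_edge_count W e) ` V)"
    then consider "a = 0" | x where "x \<in> V" "a = sigma E (\<lambda>e. 1 + walk_edge_count W e) x" by auto
    then show "a \<le> max_degree V E + walk_max_vertex V W"
    proof cases
      case 1 then show ?thesis by simp
    next
      case 2
      have "a = degree E x + walk_vertex_count W x"
        using 2 sigma_walk[OF sg w] unfolding plus_walk_degree_def by simp
      moreover have "degree E x \<le> max_degree V E" using deg_le[OF sg 2(1)] .
      moreover have "walk_vertex_count W x \<le> walk_max_vertex V W"
        unfolding walk_max_vertex_def using fV 2(1) by (intro Max_ge) auto
      ultimately show ?thesis by linarith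
    qed
  qed
qed

lemma UB:
  assumes sg: "simple_graph V E" and cg: "connected_graph V E" and pl: "proper_labelling E l"
  shows "\<exists>W. irregularising V E W \<and> set (el W) \<subseteq> E \<and>
     (\<forall>e\<in>E. walk_edge_count W e = 2 * max_degree V E * l e)"
proof -
  define D where "D = max_degree V E"
  have fE: "finite E" using simple_finiteE[OF sg] .
  have fV: "finite V" using sg unfolding simple_graph_def by simp
  obtain W0 where W0: "W0 \<noteq> []" "set W0 = V" "set (el W0) \<subseteq> E"
    "\<forall>x. count_list (el W0) x = 0 \<or> count_list (el W0) x = 2" using spanning[OF sg cg] by blast
  define d where "d = (\<lambda>e. D * l e - count_list (el W0) e div 2)"
  have cond: "\<forall>e\<in>E. e \<in> E \<and> (\<exists>u v. e = {u,v} \<and> u \<in> set W0 \<and> v \<in> set W0)"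
  proof
    fix e assume e: "e \<in> E"
    then obtain u v where "e = {u,v}" "u \<in> V" "v \<in> V" using sg unfolding simple_graph_def by meson
    then show "e \<in> E \<and> (\<exists>u v. e = {u,v} \<and> u \<in> set W0 \<and> v \<in> set W0)" using e W0(2) by auto
  qed
  obtain W where W: "set W = set W0" "set (el W) \<subseteq> E"
    "\<forall>x. count_list (el W) x = count_list (el W0) x + (if x \<in> E then 2 * d x else 0)"
    using detoursF[OF fE cond W0(3), of d] by blast
  have cnt: "walk_edge_count W e = 2 * D * l e" if e: "e \<in> E" for e
  proof -
    have "1 \<le> D" unfolding D_def using D_pos[OF sg e] .
    moreover have "1 \<le> l e" using pl e unfolding proper_labelling_def labelling_def by simp
    ultimately have "1 * 1 \<le> D * l e" by (intro mult_le_mono)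
    then have t: "1 \<le> D * l e" by simp
    define k where "k = D * l e"
    have k1: "1 \<le> k" using t unfolding k_def .
    have kk: "2 * D * l e = 2 * k" unfolding k_def by simp
    have ew: "walk_edge_count W e = count_list (el W0) e + 2 * (k - count_list (el W0) e div 2)"
      using W(3) e unfolding wec_el d_def k_def by simp
    have c: "count_list (el W0) e = 0 \<or> count_list (el W0) e = 2" using W0(4) by blast
    then show ?thesis
    proof
      assume "count_list (el W0) e = 0"
      then show ?thesis using ew kk by simp
    next
      assume "count_list (el W0) e = 2"
      then have "walk_edge_count W e = 2 + 2 * (k - 1)" using ew by simp
      then show ?thesis using kk k1 by linarith
    qed
  qed
  have wvc: "walk_vertex_count W u = 2 * D * sigma E l u" for u
  proof -
    have "walk_vertex_count W u = (\<Sum>e\<in>{e\<in>E. u \<in> e}. walk_edge_count W e)" using wvc_sum[OF W(2) fE] .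
    also have "\<dots> = (\<Sum>e\<in>{e\<in>E. u \<in> e}. 2 * D * l e)" by (rule sum.cong) (auto simp: cnt)
    also have "\<dots> = 2 * D * sigma E l u" unfolding sigma_def by (simp add: sum_distrib_left)
    finally show ?thesis .
  qed
  have walk: "is_walk V E W" unfolding is_walk_el using W W0 by auto
  have "irregularising V E W"
    unfolding irregularising_def
  proof (intro conjI allI impI walk)
    fix u v assume uv: "{u,v} \<in> E"
    have uvV: "u \<in> V" "v \<in> V" using simple_edge[OF sg uv] by auto
    have "degree E u + 2 * D * sigma E l u \<noteq> degree E v + 2 * D * sigma E l v"
    proof (rule arith2)
      show "degree E u \<le> D" unfolding D_def using deg_le[OF sg uvV(1)] .
      show "degree E v \<le> D" unfolding D_def using deg_le[OF sg uvV(2)] .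
      show "1 \<le> D" unfolding D_def using D_pos[OF sg uv] .
      show "sigma E l u \<noteq> sigma E l v" using pl uv unfolding proper_labelling_def by blast
    qed
    then show "plus_walk_degree E W u \<noteq> plus_walk_degree E W v"
      unfolding plus_walk_degree_def wvc .
  qed
  then show ?thesis using W(2) cnt unfolding D_def by blast
qed

theorem theorem4p3:
  fixes V :: "'a set" and E :: "'a set set"
  assumes "nice_graph V E"
  defines "m \<equiv> card E" and "\<Delta> \<equiv> max_degree V E"
  shows "(min_label_sum E \<le> min_len_W V E + m \<and>
          min_len_W V E + m \<le> 3 * (m + \<Delta> * min_label_sum E))
       \<and> (chi_s E \<le> min_edge_W V E + 1 \<and> min_edge_W V E + 1 \<le> 3 * (1 + \<Delta> * chi_s E))
       \<and> (min_vertex_sum V E \<le> min_vert_W V E + \<Delta> \<and>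
          min_vert_W V E + \<Delta> \<le> 3 * \<Delta> * (1 + min_vertex_sum V E))"
proof -
  have sg: "simple_graph V E" and cg: "connected_graph V E"
    using assms(1) unfolding nice_graph_def by auto
  have fE: "finite E" using simple_finiteE[OF sg] .
  have fV: "finite V" using sg unfolding simple_graph_def by simp
  obtain l0 where l0: "proper_labelling E l0" using exists_proper[OF assms(1)] by blast
  have "\<exists>x l. proper_labelling E l \<and> label_sum E l = x" using l0 by blast
  then obtain lx where lx: "proper_labelling E lx" "label_sum E lx = min_label_sum E"
    unfolding min_label_sum_def using LeastI_ex[of "\<lambda>x. \<exists>l. proper_labelling E l \<and> label_sum E l = x"] by blast
  have "\<forall>e\<in>E. l0 e \<le> sum l0 E" using fE by (intro ballI member_le_sum) auto
  then have "\<exists>k l. proper_labelling E l \<and> (\<forall>e\<in>E. l e \<le> k)" using l0 by blast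
  then obtain lk where lk: "proper_labelling E lk" "\<forall>e\<in>E. lk e \<le> chi_s E"
    unfolding chi_s_def using LeastI_ex[of "\<lambda>k. \<exists>l. proper_labelling E l \<and> (\<forall>e\<in>E. l e \<le> k)"] by blast
  have "\<exists>x l. proper_labelling E l \<and> vertex_sum V E l = x" using l0 by blast
  then obtain lv where lv: "proper_labelling E lv" "vertex_sum V E lv = min_vertex_sum V E"
    unfolding min_vertex_sum_def using LeastI_ex[of "\<lambda>x. \<exists>l. proper_labelling E l \<and> vertex_sum V E l = x"] by blast
  obtain W0 where W0: "irregularising V E W0" using UB[OF sg cg l0] by blast
  have "\<exists>n W. irregularising V E W \<and> walk_length W = n" using W0 by blast
  then obtain Wl where Wl: "irregularising V E Wl" "walk_length Wl = min_len_W V E"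
    unfolding min_len_W_def using LeastI_ex[of "\<lambda>n. \<exists>W. irregularising V E W \<and> walk_length W = n"] by blast
  have "\<exists>n W. irregularising V E W \<and> walk_max_edge E W = n" using W0 by blast
  then obtain We where We: "irregularising V E We" "walk_max_edge E We = min_edge_W V E"
    unfolding min_edge_W_def using LeastI_ex[of "\<lambda>n. \<exists>W. irregularising V E W \<and> walk_max_edge E W = n"] by blast
  have "\<exists>n W. irregularising V E W \<and> walk_max_vertex V W = n" using W0 by blast
  then obtain Wv where Wv: "irregularising V E Wv" "walk_max_vertex V Wv = min_vert_W V E"
    unfolding min_vert_W_def using LeastI_ex[of "\<lambda>n. \<exists>W. irregularising V E W \<and> walk_max_vertex V W = n"] by blast
  have p1a: "min_label_sum E \<le> min_len_W V E + m"
  proof -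
    have "proper_labelling E (\<lambda>e. 1 + walk_edge_count Wl e) \<and>
       label_sum E (\<lambda>e. 1 + walk_edge_count Wl e) = min_len_W V E + m"
      using LB(1,2)[OF sg Wl(1)] Wl(2) unfolding m_def by simp
    then show ?thesis unfolding min_label_sum_def by (intro Least_le) blast
  qed
  have p1b: "min_len_W V E + m \<le> 3 * (m + \<Delta> * min_label_sum E)"
  proof -
    obtain W where W: "irregularising V E W" "set (el W) \<subseteq> E"
      "\<forall>e\<in>E. walk_edge_count W e = 2 * \<Delta> * lx e" using UB[OF sg cg lx(1)] unfolding \<Delta>_def by blast
    have "walk_length W = (\<Sum>e\<in>E. walk_edge_count W e)" using wl_sum[OF W(2) fE] .
    also have "\<dots> = (\<Sum>e\<in>E. 2 * \<Delta> * lx e)" using W(3) by (intro sum.cong) auto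
    also have "\<dots> = 2 * \<Delta> * (\<Sum>e\<in>E. lx e)" by (rule sum_distrib_left[symmetric])
    also have "\<dots> = 2 * \<Delta> * min_label_sum E" using lx(2) unfolding label_sum_def by simp
    finally have wl: "walk_length W = 2 * \<Delta> * min_label_sum E" .
    have "min_len_W V E \<le> walk_length W" unfolding min_len_W_def using W(1) by (intro Least_le) blast
    moreover have "2 * \<Delta> * min_label_sum E = 2 * (\<Delta> * min_label_sum E)" by simp
    moreover have "3 * (m + \<Delta> * min_label_sum E) = 3 * m + 3 * (\<Delta> * min_label_sum E)" by simp
    ultimately show ?thesis using wl by linarith
  qed
  have p2a: "chi_s E \<le> min_edge_W V E + 1"
  proof -
    have "proper_labelling E (\<lambda>e. 1 + walk_edge_count We e) \<and>
       (\<forall>e\<in>E. 1 + walk_edge_count We e \<le> min_edge_W V E + 1)"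
      using LB(1,3)[OF sg We(1)] We(2) by simp
    then show ?thesis unfolding chi_s_def by (intro Least_le) blast
  qed
  have p2b: "min_edge_W V E + 1 \<le> 3 * (1 + \<Delta> * chi_s E)"
  proof -
    obtain W where W: "irregularising V E W" "set (el W) \<subseteq> E"
      "\<forall>e\<in>E. walk_edge_count W e = 2 * \<Delta> * lk e" using UB[OF sg cg lk(1)] unfolding \<Delta>_def by blast
    have "walk_max_edge E W \<le> 2 * \<Delta> * chi_s E"
      unfolding walk_max_edge_def
    proof (rule Max.boundedI)
      show "finite (insert 0 (walk_edge_count W ` E))" using fE by simp
      show "insert 0 (walk_edge_count W ` E) \<noteq> {}" by simp
      fix a assume "a \<in> insert 0 (walk_edge_count W ` E)"
      then consider "a = 0" | e where "e \<in> E" "a = walk_edge_count W e" by auto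
      then show "a \<le> 2 * \<Delta> * chi_s E"
      proof cases
        case 1 then show ?thesis by simp
      next
        case 2 then show ?thesis using W(3) lk(2) by (simp add: mult_le_mono2)
      qed
    qed
    moreover have "min_edge_W V E \<le> walk_max_edge E W" unfolding min_edge_W_def using W(1) by (intro Least_le) blast
    moreover have "2 * \<Delta> * chi_s E = 2 * (\<Delta> * chi_s E)" by simp
    moreover have "3 * (1 + \<Delta> * chi_s E) = 3 + 3 * (\<Delta> * chi_s E)" by simp
    ultimately show ?thesis by linarith
  qed
  have p3a: "min_vertex_sum V E \<le> min_vert_W V E + \<Delta>"
  proof -
    have "proper_labelling E (\<lambda>e. 1 + walk_edge_count Wv e) \<and>
       vertex_sum V E (\<lambda>e. 1 + walk_edge_count Wv e) \<le> min_vert_W V E + \<Delta>"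
      using LB(1,4)[OF sg Wv(1)] Wv(2) unfolding \<Delta>_def by simp
    then have "min_vertex_sum V E \<le> vertex_sum V E (\<lambda>e. 1 + walk_edge_count Wv e)"
      unfolding min_vertex_sum_def by (intro Least_le) blast
    then show ?thesis using \<open>proper_labelling E _ \<and> _ \<le> _\<close> by linarith
  qed
  have p3b: "min_vert_W V E + \<Delta> \<le> 3 * \<Delta> * (1 + min_vertex_sum V E)"
  proof -
    obtain W where W: "irregularising V E W" "set (el W) \<subseteq> E"
      "\<forall>e\<in>E. walk_edge_count W e = 2 * \<Delta> * lv e" using UB[OF sg cg lv(1)] unfolding \<Delta>_def by blast
    have "walk_max_vertex V W \<le> 2 * \<Delta> * min_vertex_sum V E"
      unfolding walk_max_vertex_def
    proof (rule Max.boundedI)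
      show "finite (insert 0 (walk_vertex_count W ` V))" using fV by simp
      show "insert 0 (walk_vertex_count W ` V) \<noteq> {}" by simp
      fix a assume "a \<in> insert 0 (walk_vertex_count W ` V)"
      then consider "a = 0" | x where "x \<in> V" "a = walk_vertex_count W x" by auto
      then show "a \<le> 2 * \<Delta> * min_vertex_sum V E"
      proof cases
        case 1 then show ?thesis by simp
      next
        case 2
        have "walk_vertex_count W x = (\<Sum>e\<in>{e\<in>E. x \<in> e}. walk_edge_count W e)" using wvc_sum[OF W(2) fE] .
        also have "\<dots> = (\<Sum>e\<in>{e\<in>E. x \<in> e}. 2 * \<Delta> * lv e)" using W(3) by (intro sum.cong) auto
        also have "\<dots> = 2 * \<Delta> * sigma E lv x" unfolding sigma_def by (simp add: sum_distrib_left)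
        finally have a: "a = 2 * \<Delta> * sigma E lv x" using 2(2) by simp
        have "sigma E lv x \<le> vertex_sum V E lv" unfolding vertex_sum_def using fV 2(1) by (intro Max_ge) auto
        then show ?thesis using a lv(2) by (simp add: mult_le_mono2)
      qed
    qed
    moreover have "min_vert_W V E \<le> walk_max_vertex V W" unfolding min_vert_W_def using W(1) by (intro Least_le) blast
    moreover have "2 * \<Delta> * min_vertex_sum V E = 2 * (\<Delta> * min_vertex_sum V E)" by simp
    moreover have "3 * \<Delta> * (1 + min_vertex_sum V E) = 3 * \<Delta> + 3 * (\<Delta> * min_vertex_sum V E)" by (simp add: algebra_simps)
    ultimately show ?thesis by linarith
  qed
  show ?thesis using p1a p1b p2a p2b p3a p3b by blast
qed

end
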